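(* Let $n\ge 4$ and let $D_n$ be the tree on vertex set $\{1,2,\ldots,n\}$ whose edges are $\{1,3\}$, $\{2,3\}$ and $\{i,i+1\}$ for $3\le i\le n-1$. Let $A$ be its adjacency matrix, $e$ the all-ones vector of length $n$, $W(D_n)=[e,Ae,\ldots,A^{n-1}e]$, and let $\hat W(D_n)$ be the $(n-1)\times(n-1)$ matrix obtained from $W(D_n)$ by deleting the first row and the last column. Then: (i) if $4\nmid n$, then $\det \hat W(D_n)=\pm 2^{\lfloor n/2\rfloor-1}$; (ii) if $4\mid n$, then $\operatorname{rank}\hat W(D_n)=n-2$.
   Context: $D_n$ is the Dynkin graph: the path of order $n-1$ with a pendant edge added at its second vertex (here the path is $1,3,4,\ldots,n$ and vertex $2$ is the pendant vertex attached to vertex $3$). *)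

theory Defs
  imports "Jordan_Normal_Form.Determinant" "Jordan_Normal_Form.DL_Rank"
begin

definition Dn_edge :: "nat \<Rightarrow> nat \<Rightarrow> nat \<Rightarrow> bool" where
  "Dn_edge n u v \<longleftrightarrow>
     {u, v} = {1, 3} \<or> {u, v} = {2, 3} \<or>
     (\<exists>i. 3 \<le> i \<and> i \<le> n - 1 \<and> {u, v} = {i, i + 1})"

text \<open>Adjacency matrix (0-based indices: row/column k corresponds to vertex k+1).\<close>
definition Dn_adj :: "nat \<Rightarrow> real mat" where
  "Dn_adj n = mat n n (\<lambda>(i, j). if Dn_edge n (i + 1) (j + 1) then 1 else 0)"

definition walk_mat :: "nat \<Rightarrow> real mat" where
  "walk_mat n = mat n n (\<lambda>(i, j). ((Dn_adj n ^\<^sub>m j) *\<^sub>v (vec n (\<lambda>_. 1))) $ i)"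

definition walk_mat_hat :: "nat \<Rightarrow> real mat" where
  "walk_mat_hat n = mat (n - 1) (n - 1) (\<lambda>(i, j). walk_mat n $$ (i + 1, j))"

end

theory Submission
  imports Defs
begin


lemma mult_mat_entry:
  fixes A :: "real mat"
  assumes A: "A \<in> carrier_mat m m" and i: "i < m" and j: "j < m"
  shows "(A * mat m m f) $$ (i, j) = (\<Sum>k<m. A $$ (i, k) * f (k, j))"
  using A i j by (auto simp: scalar_prod_def lessThan_atLeast0 intro!: sum.cong)

lemma det_unit_tri:
  fixes C :: "nat \<Rightarrow> nat \<Rightarrow> real"
  assumes tri: "(\<forall>k j. j \<le> k \<longrightarrow> C k j = 0) \<or> (\<forall>k j. k \<le> j \<longrightarrow> C k j = 0)"
  shows "det (mat m m (\<lambda>(k, j). (if k = j then 1 else 0) + C k j)) = 1"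
proof -
  let ?T = "mat m m (\<lambda>(k, j). (if k = j then 1 else 0) + C k j) :: real mat"
  have diag: "prod_list (diag_mat ?T) = 1"
  proof -
    have "diag_mat ?T = map (\<lambda>i. 1) [0..<m]"
      using tri by (auto simp: diag_mat_def)
    then show ?thesis by (simp add: prod_list_replicate map_replicate_const)
  qed
  from tri show ?thesis
  proof
    assume u: "\<forall>k j. j \<le> k \<longrightarrow> C k j = 0"
    have "upper_triangular ?T" using u by (auto simp: upper_triangular_def)
    then show ?thesis using det_upper_triangular[of ?T m] diag by auto
  next
    assume l: "\<forall>k j. k \<le> j \<longrightarrow> C k j = 0"
    show ?thesis using det_lower_triangular[of m ?T] diag l by auto
  qed
qed

lemma det_mult_unit_tri:
  fixes A :: "real mat" and C :: "nat \<Rightarrow> nat \<Rightarrow> real"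
  assumes A: "A \<in> carrier_mat m m"
  and tri: "(\<forall>k j. j \<le> k \<longrightarrow> C k j = 0) \<or> (\<forall>k j. k \<le> j \<longrightarrow> C k j = 0)"
  shows "det (A * mat m m (\<lambda>(k, j). (if k = j then 1 else 0) + C k j)) = det A"
  using det_mult[OF A, of "mat m m (\<lambda>(k, j). (if k = j then 1 else 0) + C k j)"] det_unit_tri[OF tri, of m]
  by simp

lemma mult_unit_entry:
  fixes A :: "real mat"
  assumes A: "A \<in> carrier_mat m m" and i: "i < m" and j: "j < m"
  shows "(A * mat m m (\<lambda>(k, j). (if k = j then 1 else 0) + C k j)) $$ (i, j)
     = A $$ (i, j) + (\<Sum>k<m. A $$ (i, k) * C k j)"
proof -
  have "(A * mat m m (\<lambda>(k, j). (if k = j then 1 else 0) + C k j)) $$ (i, j)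
     = (\<Sum>k<m. A $$ (i, k) * ((if k = j then 1 else 0) + C k j))"
    using mult_mat_entry[OF A i j, of "\<lambda>(k, j). (if k = j then 1 else 0) + C k j"] by simp
  also have "\<dots> = (\<Sum>k<m. A $$ (i, k) * (if k = j then 1 else 0)) + (\<Sum>k<m. A $$ (i, k) * C k j)"
    by (simp add: distrib_left sum.distrib)
  also have "(\<Sum>k<m. A $$ (i, k) * (if k = j then 1 else 0)) = A $$ (i, j)"
    using j by (simp add: if_distrib sum.delta cong: if_cong)
  finally show ?thesis .
qed

lemma sum_delta_cond:
  fixes f :: "nat \<Rightarrow> real"
  assumes "finite S"
  shows "(\<Sum>k\<in>S. f k * (if k = t \<and> P k then c else 0)) = (if t \<in> S \<and> P t then f t * c else 0)"
proof -
  have "(\<Sum>k\<in>S. f k * (if k = t \<and> P k then c else 0)) = (\<Sum>k\<in>S. if k = t then (if P t then f t * c else 0) else 0)"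
    by (rule sum.cong) auto
  also have "\<dots> = (if t \<in> S \<and> P t then f t * c else 0)"
    using assms by (simp add: sum.delta)
  finally show ?thesis .
qed

lemma det_pivot:
  fixes A :: "real mat" and pi psi :: "nat \<Rightarrow> nat" and key :: "nat \<Rightarrow> nat"
  assumes A: "A \<in> carrier_mat m m"
    and pi_lt: "\<And>j. j < m \<Longrightarrow> pi j < m"
    and psi_lt: "\<And>i. i < m \<Longrightarrow> psi i < m"
    and psi_pi: "\<And>j. j < m \<Longrightarrow> psi (pi j) = j"
    and pi_psi: "\<And>i. i < m \<Longrightarrow> pi (psi i) = i"
    and nz: "\<And>i j. i < m \<Longrightarrow> j < m \<Longrightarrow> A $$ (i, j) \<noteq> 0 \<Longrightarrow> i = pi j \<or> key (pi j) < key i"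
  shows "\<bar>det A\<bar> = \<bar>\<Prod>j<m. A $$ (pi j, j)\<bar>"
proof -
  define q where "q i = (if i < m then psi i else i)" for i
  have bpi: "bij_betw pi {0..<m} {0..<m}"
    by (rule bij_betw_byWitness[where f' = psi]) (use pi_lt psi_lt psi_pi pi_psi in auto)
  have bq: "bij_betw q {0..<m} {0..<m}"
    by (rule bij_betw_byWitness[where f' = pi]) (use pi_lt psi_lt psi_pi pi_psi in \<open>auto simp: q_def\<close>)
  have qp: "q permutes {0..<m}"
    by (rule bij_imp_permutes[OF bq]) (auto simp: q_def)
  have zero: "(\<Prod>i = 0..<m. A $$ (i, p i)) = 0" if p: "p permutes {0..<m}" and pq: "p \<noteq> q" for p
  proof (rule ccontr)
    assume "(\<Prod>i = 0..<m. A $$ (i, p i)) \<noteq> 0"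
    then have nzi: "\<And>i. i < m \<Longrightarrow> A $$ (i, p i) \<noteq> 0" by auto
    have plt: "\<And>i. i < m \<Longrightarrow> p i < m" using p by (simp add: permutes_in_image)
    have cond: "\<And>i. i < m \<Longrightarrow> i = pi (p i) \<or> key (pi (p i)) < key i"
      using nz nzi plt by blast
    have bpp: "bij_betw (pi \<circ> p) {0..<m} {0..<m}"
      using bij_betw_trans[OF permutes_imp_bij[OF p] bpi] .
    have eqsum: "(\<Sum>i\<in>{0..<m}. key (pi (p i))) = (\<Sum>i\<in>{0..<m}. key i)"
      using sum.reindex_bij_betw[OF bpp, of key] by simp
    have all: "\<forall>i<m. pi (p i) = i"
    proof (rule ccontr)
      assume "\<not> (\<forall>i<m. pi (p i) = i)"
      then obtain i0 where i0: "i0 < m" "pi (p i0) \<noteq> i0" by auto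
      have "(\<Sum>i\<in>{0..<m}. key (pi (p i))) < (\<Sum>i\<in>{0..<m}. key i)"
      proof (rule sum_strict_mono_ex1)
        show "\<forall>x\<in>{0..<m}. key (pi (p x)) \<le> key x" using cond by force
        show "\<exists>a\<in>{0..<m}. key (pi (p a)) < key a" using cond i0 by force
      qed simp
      then show False using eqsum by simp
    qed
    have "p = q"
    proof
      fix i show "p i = q i"
      proof (cases "i < m")
        case True
        then have "psi (pi (p i)) = p i" using psi_pi plt by blast
        then show ?thesis using all True by (simp add: q_def)
      next
        case False
        then show ?thesis using p by (simp add: q_def permutes_def)
      qed
    qed
    then show False using pq by simp
  qed
  have "det A = (\<Sum>p\<in>{p. p permutes {0..<m}}. of_int (sign p) * (\<Prod>i = 0..<m. A $$ (i, p i)))"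
    by (rule det_def'[OF A])
  also have "\<dots> = of_int (sign q) * (\<Prod>i = 0..<m. A $$ (i, q i))"
    apply (subst sum.remove[where x = q])
     apply (simp add: finite_permutations)
    using qp apply simp
    apply (subst sum.neutral)
    using zero by auto
  finally have d: "det A = of_int (sign q) * (\<Prod>i = 0..<m. A $$ (i, q i))" .
  have "(\<Prod>i = 0..<m. A $$ (i, q i)) = (\<Prod>j = 0..<m. A $$ (pi j, q (pi j)))"
    using prod.reindex_bij_betw[OF bpi, of "\<lambda>i. A $$ (i, q i)"] by simp
  also have "\<dots> = (\<Prod>j<m. A $$ (pi j, j))"
    using pi_lt psi_pi by (auto simp: q_def lessThan_atLeast0 intro!: prod.cong)
  finally have "(\<Prod>i = 0..<m. A $$ (i, q i)) = (\<Prod>j<m. A $$ (pi j, j))" .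
  then show ?thesis using d by (simp add: abs_mult sign_def)
qed



definition Bop :: "nat \<Rightarrow> (nat \<Rightarrow> real) \<Rightarrow> nat \<Rightarrow> real" where
  "Bop m x t = (if t = 0 then 0 else if t = 1 then 2 * x 0 else x (t - 1)) + (if t + 1 < m then x (t + 1) else 0)"

fun bw :: "nat \<Rightarrow> nat \<Rightarrow> nat \<Rightarrow> real" where
  "bw m 0 = (\<lambda>_. 1)"
| "bw m (Suc j) = Bop m (bw m j)"

definition Kmat :: "nat \<Rightarrow> real mat" where
  "Kmat m = mat m m (\<lambda>(i, j). bw m j i)"

definition adjf :: "nat \<Rightarrow> nat \<Rightarrow> nat \<Rightarrow> real" where
  "adjf n i k = (if Dn_edge n (i + 1) (k + 1) then 1 else 0)"

fun aw :: "nat \<Rightarrow> nat \<Rightarrow> nat \<Rightarrow> real" where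
  "aw n 0 = (\<lambda>_. 1)"
| "aw n (Suc j) = (\<lambda>i. \<Sum>k<n. adjf n i k * aw n j k)"

lemma pow_mat_Suc_left:
  fixes A :: "real mat"
  assumes A: "A \<in> carrier_mat n n"
  shows "A ^\<^sub>m Suc k = A * A ^\<^sub>m k"
proof (induction k)
  case 0
  then show ?case using A by simp
next
  case (Suc k)
  have "A ^\<^sub>m Suc (Suc k) = (A * A ^\<^sub>m k) * A" using Suc by simp
  also have "\<dots> = A * (A ^\<^sub>m k * A)"
    using A by (simp add: assoc_mult_mat[of A n n "A ^\<^sub>m k" n A n])
  finally show ?case by simp
qed

lemma Dn_adj_carrier: "Dn_adj n \<in> carrier_mat n n"
  by (simp add: Dn_adj_def)

lemma walk_aw:
  assumes "i < n"
  shows "((Dn_adj n ^\<^sub>m j) *\<^sub>v vec n (\<lambda>_. 1)) $ i = aw n j i"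
  using assms
proof (induction j arbitrary: i)
  case 0
  then show ?case using Dn_adj_carrier[of n] by simp
next
  case (Suc j)
  have c: "Dn_adj n ^\<^sub>m j \<in> carrier_mat n n" using Dn_adj_carrier by simp
  have "(Dn_adj n ^\<^sub>m Suc j) *\<^sub>v vec n (\<lambda>_. 1) = Dn_adj n *\<^sub>v ((Dn_adj n ^\<^sub>m j) *\<^sub>v vec n (\<lambda>_. 1))"
    using pow_mat_Suc_left[OF Dn_adj_carrier] Dn_adj_carrier c
    by (simp add: assoc_mult_mat_vec[of _ n n _ n])
  also have "\<dots> $ i = (\<Sum>k<n. adjf n i k * aw n j k)"
    using Suc.prems Suc.IH c
    by (auto simp: Dn_adj_def adjf_def scalar_prod_def lessThan_atLeast0 intro!: sum.cong)
  finally show ?case by simp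
qed

lemma Dn_edge_iff:
  "Dn_edge n u v \<longleftrightarrow> (u = 1 \<and> v = 3) \<or> (u = 3 \<and> v = 1) \<or> (u = 2 \<and> v = 3) \<or> (u = 3 \<and> v = 2)
     \<or> (3 \<le> u \<and> u \<le> n - 1 \<and> v = u + 1) \<or> (3 \<le> v \<and> v \<le> n - 1 \<and> u = v + 1)"
  unfolding Dn_edge_def doubleton_eq_iff by auto

lemma adjf_eq:
  assumes "i < n" "k < n"
  shows "adjf n i k = (if (i = 0 \<and> k = 2) \<or> (i = 2 \<and> k = 0) \<or> (i = 1 \<and> k = 2) \<or> (i = 2 \<and> k = 1)
     \<or> (2 \<le> i \<and> k = i + 1) \<or> (2 \<le> k \<and> i = k + 1) then 1 else 0)"
proof -
  have "Dn_edge n (i + 1) (k + 1) \<longleftrightarrow> (i = 0 \<and> k = 2) \<or> (i = 2 \<and> k = 0) \<or> (i = 1 \<and> k = 2) \<or> (i = 2 \<and> k = 1)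
     \<or> (2 \<le> i \<and> k = i + 1) \<or> (2 \<le> k \<and> i = k + 1)"
    unfolding Dn_edge_iff using assms by auto
  then show ?thesis by (simp add: adjf_def)
qed

lemma sum_adj_set:
  fixes x :: "nat \<Rightarrow> real"
  assumes "\<And>k. k < n \<Longrightarrow> adjf n i k = (if k \<in> S then 1 else 0)" and "S \<subseteq> {..<n}"
  shows "(\<Sum>k<n. adjf n i k * x k) = sum x S"
proof -
  have "(\<Sum>k<n. adjf n i k * x k) = (\<Sum>k<n. if k \<in> S then x k else 0)"
    using assms(1) by (auto intro!: sum.cong)
  also have "\<dots> = sum x ({..<n} \<inter> S)" by (simp add: sum.inter_restrict)
  also have "{..<n} \<inter> S = S" using assms(2) by auto
  finally show ?thesis .
qed

lemma adj_sum:
  fixes x :: "nat \<Rightarrow> real"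
  assumes n: "4 \<le> n" and i: "i < n"
  shows "(\<Sum>k<n. adjf n i k * x k) =
    (if i = 0 then x 2 else if i = 1 then x 2 else if i = 2 then x 0 + x 1 + x 3
     else x (i - 1) + (if i + 1 < n then x (i + 1) else 0))"
proof -
  consider "i = 0" | "i = 1" | "i = 2" | "3 \<le> i" "i + 1 < n" | "3 \<le> i" "i + 1 = n" using i by linarith
  then show ?thesis
  proof cases
    case 1
    have "(\<Sum>k<n. adjf n i k * x k) = sum x {2}"
    proof (rule sum_adj_set)
      fix k assume "k < n" then show "adjf n i k = (if k \<in> {2} then 1 else 0)"
        using adjf_eq[OF i, of k] 1 by simp
    qed (use n in auto)
    then show ?thesis using 1 by simp
  next
    case 2
    have "(\<Sum>k<n. adjf n i k * x k) = sum x {2}"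
    proof (rule sum_adj_set)
      fix k assume "k < n" then show "adjf n i k = (if k \<in> {2} then 1 else 0)"
        using adjf_eq[OF i, of k] 2 by simp
    qed (use n in auto)
    then show ?thesis using 2 by simp
  next
    case 3
    have "(\<Sum>k<n. adjf n i k * x k) = sum x {0, 1, 3}"
    proof (rule sum_adj_set)
      fix k assume "k < n" then show "adjf n i k = (if k \<in> {0, 1, 3} then 1 else 0)"
        using adjf_eq[OF i, of k] 3 by auto
    qed (use n in auto)
    then show ?thesis using 3 by simp
  next
    case 4
    have "(\<Sum>k<n. adjf n i k * x k) = sum x {i - 1, i + 1}"
    proof (rule sum_adj_set)
      fix k assume "k < n"
      have "((i = 0 \<and> k = 2) \<or> (i = 2 \<and> k = 0) \<or> (i = 1 \<and> k = 2) \<or> (i = 2 \<and> k = 1)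
         \<or> (2 \<le> i \<and> k = i + 1) \<or> (2 \<le> k \<and> i = k + 1)) \<longleftrightarrow> k \<in> {i - 1, i + 1}"
        using 4 by auto
      then show "adjf n i k = (if k \<in> {i - 1, i + 1} then 1 else 0)"
        by (subst adjf_eq[OF i \<open>k < n\<close>]) (simp only:)
    qed (use 4 in auto)
    then show ?thesis using 4 by simp
  next
    case 5
    have "(\<Sum>k<n. adjf n i k * x k) = sum x {i - 1}"
    proof (rule sum_adj_set)
      fix k assume "k < n"
      have "((i = 0 \<and> k = 2) \<or> (i = 2 \<and> k = 0) \<or> (i = 1 \<and> k = 2) \<or> (i = 2 \<and> k = 1)
         \<or> (2 \<le> i \<and> k = i + 1) \<or> (2 \<le> k \<and> i = k + 1)) \<longleftrightarrow> k \<in> {i - 1}"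
        using 5 \<open>k < n\<close> by auto
      then show "adjf n i k = (if k \<in> {i - 1} then 1 else 0)"
        by (subst adjf_eq[OF i \<open>k < n\<close>]) (simp only:)
    qed (use 5 in auto)
    then show ?thesis using 5 by simp
  qed
qed

lemma aw_01:
  assumes "4 \<le> n"
  shows "aw n j 0 = aw n j 1"
  using assms by (cases j) (simp_all add: adj_sum)

lemma bw_aw:
  assumes n: "4 \<le> n" and t: "t < n - 1"
  shows "bw (n - 1) j t = aw n j (t + 1)"
  using t
proof (induction j arbitrary: t)
  case 0
  then show ?case by simp
next
  case (Suc j)
  have e: "aw n (Suc j) (t + 1) = (\<Sum>k<n. adjf n (t + 1) k * aw n j k)" by simp
  have tn: "t + 1 < n" using Suc.prems by linarith
  have bs: "bw (n - 1) (Suc j) t = Bop (n - 1) (bw (n - 1) j) t" by simp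
  consider "t = 0" | "t = 1" | "2 \<le> t" by linarith
  then show ?case
  proof cases
    case 1
    have "aw n (Suc j) (t + 1) = aw n j 2" using e adj_sum[OF n tn, of "aw n j"] 1 by simp
    moreover have "bw (n - 1) (Suc j) t = bw (n - 1) j 1" using bs 1 n by (simp add: Bop_def)
    moreover have "bw (n - 1) j 1 = aw n j 2" using Suc.IH[of 1] n by (simp add: numeral_2_eq_2)
    ultimately show ?thesis by simp
  next
    case 2
    have "aw n (Suc j) (t + 1) = aw n j 0 + aw n j 1 + aw n j 3" using e adj_sum[OF n tn, of "aw n j"] 2 by simp
    moreover have "bw (n - 1) (Suc j) t = 2 * bw (n - 1) j 0 + bw (n - 1) j 2" using bs 2 n by (simp add: Bop_def numeral_2_eq_2)
    moreover have "bw (n - 1) j 0 = aw n j 1" using Suc.IH[of 0] n by simp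
    moreover have "bw (n - 1) j 2 = aw n j 3" using Suc.IH[of 2] n by (simp add: numeral_2_eq_2 numeral_3_eq_3)
    moreover have "aw n j 0 = aw n j 1" by (rule aw_01[OF n])
    ultimately show ?thesis by simp
  next
    case 3
    have a: "aw n (Suc j) (t + 1) = aw n j t + (if t + 2 < n then aw n j (t + 2) else 0)"
      using e adj_sum[OF n tn, of "aw n j"] 3 by simp
    have b: "bw (n - 1) (Suc j) t = bw (n - 1) j (t - 1) + (if t + 1 < n - 1 then bw (n - 1) j (t + 1) else 0)"
      using bs 3 by (simp add: Bop_def)
    have c1: "bw (n - 1) j (t - 1) = aw n j t" using Suc.IH[of "t - 1"] Suc.prems 3 by simp
    have c2: "t + 1 < n - 1 \<Longrightarrow> bw (n - 1) j (t + 1) = aw n j (t + 2)" using Suc.IH[of "t + 1"] by simp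
    have c3: "t + 1 < n - 1 \<longleftrightarrow> t + 2 < n" by linarith
    show ?thesis using a b c1 c2 c3 by simp
  qed
qed

lemma walk_hat_K:
  assumes n: "4 \<le> n"
  shows "walk_mat_hat n = Kmat (n - 1)"
proof (rule eq_matI)
  fix i j assume i: "i < dim_row (Kmat (n - 1))" and j: "j < dim_col (Kmat (n - 1))"
  then have i': "i < n - 1" and j': "j < n - 1" by (auto simp: Kmat_def)
  have "walk_mat_hat n $$ (i, j) = walk_mat n $$ (i + 1, j)"
    using i' j' by (simp add: walk_mat_hat_def)
  also have "\<dots> = aw n j (i + 1)"
    using i' j' walk_aw[of "i + 1" n j] by (simp add: walk_mat_def)
  also have "\<dots> = bw (n - 1) j i" using bw_aw[OF n i'] by simp
  finally show "walk_mat_hat n $$ (i, j) = Kmat (n - 1) $$ (i, j)"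
    using i' j' by (simp add: Kmat_def)
qed (auto simp: walk_mat_hat_def Kmat_def)



definition zf :: "nat \<Rightarrow> nat \<Rightarrow> nat \<Rightarrow> real" where
  "zf m j i = (if j = 0 then 1 else if j = 1 then (if i = 1 then 2 else if 2 \<le> i \<and> i + 2 \<le> m then 1 else 0)
     else (if i = j then 1 else 0) - (if i + 1 = j then 1 else 0) - (if i + j = m then 1 else 0) - (if i + j = m + 1 then 1 else 0))"

definition cc :: "nat \<Rightarrow> real" where "cc j = (if j = 1 then -1 else if j = 2 then 1 else 0)"

lemma t_cases:
  fixes t :: nat
  obtains "t = 0" | "t = 1" | s where "t = s + 2"
proof (cases t)
  case 0 then show ?thesis using that by simp
next
  case (Suc u) then show ?thesis using that by (cases u) auto
qed

lemma z_rec: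
  assumes j: "j + 2 < m" and t: "t < m"
  shows "zf m (j + 2) t = Bop m (zf m (j + 1)) t - zf m j t + cc (j + 1)"
proof -
  consider "j = 0" | "j = 1" | "2 \<le> j" by linarith
  then show ?thesis
  proof cases
    case 1
    show ?thesis by (rule t_cases[of t]) (use 1 j t in \<open>simp_all add: zf_def Bop_def cc_def\<close>)
  next
    case 2
    show ?thesis by (rule t_cases[of t]) (use 2 j t in \<open>simp_all add: zf_def Bop_def cc_def\<close>)
  next
    case 3
    show ?thesis by (rule t_cases[of t]) (use 3 j t in \<open>simp_all add: zf_def Bop_def cc_def\<close>)
  qed
qed

lemma z_one:
  assumes m: "3 \<le> m" and t: "t < m"
  shows "zf m 1 t = Bop m (\<lambda>_. 1) t - 1"
  by (rule t_cases[of t]) (use m t in \<open>simp_all add: zf_def Bop_def\<close>)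

fun rc :: "nat \<Rightarrow> nat \<Rightarrow> real" where
  "rc 0 = (\<lambda>k. if k = 0 then 1 else 0)"
| "rc (Suc 0) = (\<lambda>k. if k = 1 then 1 else if k = 0 then -1 else 0)"
| "rc (Suc (Suc j)) = (\<lambda>k. (if k = 0 then 0 else rc (Suc j) (k - 1)) - rc j k + (if k = 0 then cc (Suc j) else 0))"

lemma rc_zero: "j < k \<Longrightarrow> rc j k = 0"
proof (induction j arbitrary: k rule: less_induct)
  case (less j)
  show ?case
  proof (cases j)
    case 0 then show ?thesis using less.prems by simp
  next
    case (Suc j')
    show ?thesis
    proof (cases j')
      case 0 then show ?thesis using Suc less.prems by simp
    next
      case (Suc j'')
      have a: "rc (Suc j'') (k - 1) = 0" using less.IH[of "Suc j''" "k - 1"] less.prems \<open>j = Suc j'\<close> Suc by simp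
      have b: "rc j'' k = 0" using less.IH[of "j''" k] less.prems \<open>j = Suc j'\<close> Suc by simp
      show ?thesis using a b less.prems \<open>j = Suc j'\<close> Suc by simp
    qed
  qed
qed

lemma rc_diag: "rc j j = 1"
  by (induction j rule: rc.induct) (auto simp: rc_zero)

lemma ifmult: "(if P then (a::real) else 0) * x = (if P then a * x else 0)" by simp

definition lin :: "nat \<Rightarrow> (nat \<Rightarrow> real) \<Rightarrow> nat \<Rightarrow> real" where
  "lin m c t = (\<Sum>k<m. c k * bw m k t)"

lemma Bop_lin: "Bop m (\<lambda>t. \<Sum>k<m. c k * f k t) t = (\<Sum>k<m. c k * Bop m (f k) t)"
  by (simp add: Bop_def sum_distrib_left sum.distrib algebra_simps)

lemma Bop_cong:
  assumes "\<And>s. s < m \<Longrightarrow> x s = y s" and "t < m"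
  shows "Bop m x t = Bop m y t"
  using assms by (simp add: Bop_def)

lemma lin_shift:
  assumes m: "0 < m" and c: "c (m - 1) = 0"
  shows "lin m (\<lambda>k. if k = 0 then 0 else c (k - 1)) t = Bop m (lin m c) t"
proof -
  obtain m' where m': "m = Suc m'" using m by (cases m) auto
  have "lin m (\<lambda>k. if k = 0 then 0 else c (k - 1)) t = (\<Sum>k<Suc m'. (if k = 0 then 0 else c (k - 1)) * bw m k t)"
    by (simp add: lin_def m')
  also have "\<dots> = (\<Sum>k<m'. c k * bw m (Suc k) t)"
    by (subst sum.lessThan_Suc_shift) simp
  also have "\<dots> = (\<Sum>k<Suc m'. c k * bw m (Suc k) t)"
    using c m' by simp
  also have "\<dots> = (\<Sum>k<m. c k * bw m (Suc k) t)"
    using m' by simp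
  also have "\<dots> = Bop m (lin m c) t"
    unfolding lin_def Bop_lin by simp
  finally show ?thesis .
qed

lemma lin_rc:
  assumes m: "3 \<le> m"
  shows "j < m \<Longrightarrow> t < m \<Longrightarrow> lin m (rc j) t = zf m j t"
proof (induction j arbitrary: t rule: rc.induct)
  case 1
  have "lin m (rc 0) t = (\<Sum>k<m. (if k = 0 then bw m k t else 0))"
    unfolding lin_def by (simp add: ifmult)
  also have "\<dots> = 1" using m by (simp add: sum.delta)
  finally show ?case by (simp add: zf_def)
next
  case 2
  have "lin m (rc (Suc 0)) t = (\<Sum>k<m. (if k = 1 then bw m k t else 0)) - (\<Sum>k<m. (if k = 0 then bw m k t else 0))"
    unfolding lin_def sum_subtractf[symmetric] by (rule sum.cong) auto
  also have "\<dots> = Bop m (\<lambda>_. 1) t - 1" using m by (simp add: sum.delta)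
  finally show ?case using z_one[OF m 2(2)] by simp
next
  case (3 j)
  have e: "rc (Suc (Suc j)) = (\<lambda>k. ((if k = 0 then 0 else rc (Suc j) (k - 1)) - rc j k) + cc (Suc j) * (if k = 0 then 1 else 0))"
    by (auto simp: fun_eq_iff)
  have lin_add: "lin m (\<lambda>k. a k + b k) t = lin m a t + lin m b t" for a b
    by (simp add: lin_def sum.distrib algebra_simps)
  have lin_sub: "lin m (\<lambda>k. a k - b k) t = lin m a t - lin m b t" for a b
    by (simp add: lin_def sum_subtractf algebra_simps)
  have lin_smult: "lin m (\<lambda>k. r * a k) t = r * lin m a t" for a r
    by (simp add: lin_def sum_distrib_left algebra_simps)
  have l0: "lin m (\<lambda>k. if k = 0 then 1 else 0) t = 1"
    using m by (simp add: lin_def ifmult sum.delta)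
  have rm: "rc (Suc j) (m - 1) = 0" using 3(3) by (intro rc_zero) linarith
  have "lin m (rc (Suc (Suc j))) t = Bop m (lin m (rc (Suc j))) t - lin m (rc j) t + cc (Suc j)"
    unfolding e lin_add lin_sub lin_smult l0 using lin_shift[of m "rc (Suc j)" t] rm m by simp
  also have "Bop m (lin m (rc (Suc j))) t = Bop m (zf m (Suc j)) t"
    by (rule Bop_cong) (use 3 in auto)
  also have "lin m (rc j) t = zf m j t" using 3 by simp
  finally show ?case using z_rec[of j m t] 3 by simp
qed

definition Zmat :: "nat \<Rightarrow> real mat" where
  "Zmat m = mat m m (\<lambda>(i, j). zf m j i)"

lemma det_K_Z:
  assumes m: "3 \<le> m"
  shows "Kmat m * mat m m (\<lambda>(k, j). (if k = j then 1 else 0) + (if k = j then 0 else rc j k)) = Zmat m"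
    and "det (Zmat m) = det (Kmat m)"
proof -
  have K: "Kmat m \<in> carrier_mat m m" by (simp add: Kmat_def)
  show eq: "Kmat m * mat m m (\<lambda>(k, j). (if k = j then 1 else 0) + (if k = j then 0 else rc j k)) = Zmat m"
  proof (rule eq_matI)
    fix i j assume i: "i < dim_row (Zmat m)" and j: "j < dim_col (Zmat m)"
    then have i': "i < m" and j': "j < m" by (auto simp: Zmat_def)
    have "(Kmat m * mat m m (\<lambda>(k, j). (if k = j then 1 else 0) + (if k = j then 0 else rc j k))) $$ (i, j)
        = (\<Sum>k<m. Kmat m $$ (i, k) * ((if k = j then 1 else 0) + (if k = j then 0 else rc j k)))"
      using mult_mat_entry[OF K i' j'] by simp
    also have "\<dots> = (\<Sum>k<m. rc j k * bw m k i)"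
      using i' by (auto simp: Kmat_def rc_diag intro!: sum.cong)
    also have "\<dots> = zf m j i" using lin_rc[OF m j' i'] by (simp add: lin_def)
    finally show "(Kmat m * mat m m (\<lambda>(k, j). (if k = j then 1 else 0) + (if k = j then 0 else rc j k))) $$ (i, j) = Zmat m $$ (i, j)"
      using i' j' by (simp add: Zmat_def)
  qed (auto simp: Zmat_def Kmat_def)
  have "det (Kmat m * mat m m (\<lambda>(k, j). (if k = j then 1 else 0) + (if k = j then 0 else rc j k))) = det (Kmat m)"
    by (rule det_mult_unit_tri[OF K]) (auto simp: rc_zero)
  then show "det (Zmat m) = det (Kmat m)" using eq by simp
qed



definition N1mat :: "nat \<Rightarrow> real mat" where
  "N1mat m = mat m m (\<lambda>(i, j). zf m j i + (if m + 1 < 2 * j \<and> j < m then zf m (m + 1 - j) i else 0))"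

definition nf :: "nat \<Rightarrow> nat \<Rightarrow> nat \<Rightarrow> real" where
  "nf m j i = (if j = 0 then 1 else if j = 1 then zf m 1 i
     else if 2 * j \<le> m then (if i = j then 1 else 0) - (if i + j = m + 1 then 1 else 0)
     else (if i + j = m \<or> i + 1 = j then -2 else 0))"

definition Nmat :: "nat \<Rightarrow> real mat" where
  "Nmat m = mat m m (\<lambda>(i, j). nf m j i)"

lemma Z_N1:
  assumes m: "3 \<le> m"
  shows "Zmat m * mat m m (\<lambda>(k, j). (if k = j then 1 else 0) + (if k = m + 1 - j \<and> (m + 1 < 2 * j \<and> j < m) then 1 else 0)) = N1mat m"
    (is "_ * ?T = _")
    and "det (N1mat m) = det (Zmat m)"
proof -
  have Z: "Zmat m \<in> carrier_mat m m" by (simp add: Zmat_def)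
  show eq: "Zmat m * ?T = N1mat m"
  proof (rule eq_matI)
    fix i j assume i: "i < dim_row (N1mat m)" and j: "j < dim_col (N1mat m)"
    then have i': "i < m" and j': "j < m" by (auto simp: N1mat_def)
    have "(Zmat m * ?T) $$ (i, j) = Zmat m $$ (i, j) + (\<Sum>k<m. Zmat m $$ (i, k) * (if k = m + 1 - j \<and> (m + 1 < 2 * j \<and> j < m) then 1 else 0))"
      by (rule mult_unit_entry[OF Z i' j'])
    also have "(\<Sum>k<m. Zmat m $$ (i, k) * (if k = m + 1 - j \<and> (m + 1 < 2 * j \<and> j < m) then 1 else 0))
       = (if m + 1 - j \<in> {..<m} \<and> (m + 1 < 2 * j \<and> j < m) then Zmat m $$ (i, m + 1 - j) * 1 else 0)"
      by (rule sum_delta_cond) simp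
    finally show "(Zmat m * ?T) $$ (i, j) = N1mat m $$ (i, j)"
      using i' j' by (auto simp: Zmat_def N1mat_def)
  qed (auto simp: Zmat_def N1mat_def)
  have "det (Zmat m * ?T) = det (Zmat m)"
    by (rule det_mult_unit_tri[OF Z]) auto
  then show "det (N1mat m) = det (Zmat m)" using eq by simp
qed

lemma zf_pair:
  assumes j: "2 \<le> j" "j < m"
  shows "zf m (m + 1 - j) i = (if i + j = m + 1 then 1 else 0) - (if i + j = m then 1 else 0)
     - (if i + 1 = j then 1 else 0) - (if i = j then 1 else 0)"
proof -
  have a: "m + 1 - j \<noteq> 0" "m + 1 - j \<noteq> 1" using j by auto
  have b: "(i = m + 1 - j) = (i + j = m + 1)" "(i + 1 = m + 1 - j) = (i + j = m)"
     "(i + (m + 1 - j) = m) = (i + 1 = j)" "(i + (m + 1 - j) = m + 1) = (i = j)" using j by auto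
  show ?thesis unfolding zf_def using a b by simp
qed

lemma nf_check:
  assumes m: "3 \<le> m" and i: "i < m" and j: "j < m"
  shows "zf m j i + (if m + 1 < 2 * j \<and> j < m then zf m (m + 1 - j) i else 0)
     + (if 2 \<le> j \<and> 2 * j < m + 1 then (zf m (m + 1 - j) i + (if m + 1 < 2 * (m + 1 - j) \<and> m + 1 - j < m then zf m (m + 1 - (m + 1 - j)) i else 0)) * (- 1 / 2) else 0)
     = nf m j i"
proof -
  consider "j = 0" | "j = 1" | "2 \<le> j" "2 * j \<le> m" | "2 * j = m + 1" | "m + 1 < 2 * j" by linarith
  then show ?thesis
  proof cases
    case 1 then show ?thesis using m by (simp add: zf_def nf_def)
  next
    case 2 then show ?thesis using m by (simp add: zf_def nf_def)
  next
    case 3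
    have e: "m + 1 - (m + 1 - j) = j" using 3 by simp
    have c1: "(m + 1 < 2 * j \<and> j < m) = False" "(2 \<le> j \<and> 2 * j < m + 1) = True" "(m + 1 < 2 * (m + 1 - j) \<and> m + 1 - j < m) = True" using 3 j by auto
    have zj: "zf m j i = (if i = j then 1 else 0) - (if i + 1 = j then 1 else 0) - (if i + j = m then 1 else 0) - (if i + j = m + 1 then 1 else 0)"
      using 3 by (simp add: zf_def)
    have nfj: "nf m j i = (if i = j then 1 else 0) - (if i + j = m + 1 then 1 else 0)"
      using 3 by (simp add: nf_def)
    show ?thesis unfolding e nfj c1 if_False if_True using zj zf_pair[OF 3(1) j, of i] by simp
  next
    case 4
    have c1: "(m + 1 < 2 * j \<and> j < m) = False" "(2 \<le> j \<and> 2 * j < m + 1) = False" by (use 4 in auto)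
    have zj: "zf m j i = (if i = j then 1 else 0) - (if i + 1 = j then 1 else 0) - (if i + j = m then 1 else 0) - (if i + j = m + 1 then 1 else 0)"
      using 4 m by (simp add: zf_def)
    have nfj: "nf m j i = (if i + j = m \<or> i + 1 = j then -2 else 0)"
      using 4 m by (simp add: nf_def)
    have q: "(i = j) = (i + j = m + 1)" "(i + 1 = j) = (i + j = m)" using 4 by auto
    show ?thesis unfolding nfj c1 if_False using zj q by simp
  next
    case 5
    have c1: "(m + 1 < 2 * j \<and> j < m) = True" "(2 \<le> j \<and> 2 * j < m + 1) = False" using 5 j by auto
    have j2: "2 \<le> j" using 5 m by linarith
    have zj: "zf m j i = (if i = j then 1 else 0) - (if i + 1 = j then 1 else 0) - (if i + j = m then 1 else 0) - (if i + j = m + 1 then 1 else 0)"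
      using j2 by (simp add: zf_def)
    have nfj: "nf m j i = (if i + j = m \<or> i + 1 = j then -2 else 0)"
      using 5 j2 by (simp add: nf_def)
    have q: "\<not> (i + j = m \<and> i + 1 = j)" using 5 by auto
    show ?thesis unfolding nfj c1 if_False if_True using zj zf_pair[OF j2 j, of i] q by auto
  qed
qed


lemma N1_N:
  assumes m: "3 \<le> m"
  shows "N1mat m * mat m m (\<lambda>(k, j). (if k = j then 1 else 0) + (if k = m + 1 - j \<and> (2 \<le> j \<and> 2 * j < m + 1) then - 1 / 2 else 0)) = Nmat m"
    (is "_ * ?T = _")
    and "det (Nmat m) = det (N1mat m)"
proof -
  have N1: "N1mat m \<in> carrier_mat m m" by (simp add: N1mat_def)
  show eq: "N1mat m * ?T = Nmat m"
  proof (rule eq_matI)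
    fix i j assume i: "i < dim_row (Nmat m)" and j: "j < dim_col (Nmat m)"
    then have i': "i < m" and j': "j < m" by (auto simp: Nmat_def)
    have "(N1mat m * ?T) $$ (i, j) = N1mat m $$ (i, j) + (\<Sum>k<m. N1mat m $$ (i, k) * (if k = m + 1 - j \<and> (2 \<le> j \<and> 2 * j < m + 1) then - 1 / 2 else 0))"
      by (rule mult_unit_entry[OF N1 i' j'])
    also have "(\<Sum>k<m. N1mat m $$ (i, k) * (if k = m + 1 - j \<and> (2 \<le> j \<and> 2 * j < m + 1) then - 1 / 2 else 0))
       = (if m + 1 - j \<in> {..<m} \<and> (2 \<le> j \<and> 2 * j < m + 1) then N1mat m $$ (i, m + 1 - j) * (- 1 / 2) else 0)"
      by (rule sum_delta_cond) simp
    also have "\<dots> = (if 2 \<le> j \<and> 2 * j < m + 1 then N1mat m $$ (i, m + 1 - j) * (- 1 / 2) else 0)"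
      by auto
    finally have "(N1mat m * ?T) $$ (i, j) = zf m j i + (if m + 1 < 2 * j \<and> j < m then zf m (m + 1 - j) i else 0)
     + (if 2 \<le> j \<and> 2 * j < m + 1 then (zf m (m + 1 - j) i + (if m + 1 < 2 * (m + 1 - j) \<and> m + 1 - j < m then zf m (m + 1 - (m + 1 - j)) i else 0)) * (- 1 / 2) else 0)"
      using i' j' by (auto simp: N1mat_def)
    then show "(N1mat m * ?T) $$ (i, j) = Nmat m $$ (i, j)"
      using nf_check[OF m i' j'] i' j' by (simp add: Nmat_def)
  qed (auto simp: Nmat_def N1mat_def)
  have "det (N1mat m * ?T) = det (N1mat m)"
    by (rule det_mult_unit_tri[OF N1]) auto
  then show "det (Nmat m) = det (N1mat m)" using eq by simp
qed


definition per4 :: "real \<Rightarrow> real \<Rightarrow> real \<Rightarrow> real \<Rightarrow> nat \<Rightarrow> real" where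
  "per4 a b c d x = (if x mod 4 = 0 then a else if x mod 4 = 1 then b else if x mod 4 = 2 then c else d)"

definition alpha :: "nat \<Rightarrow> nat \<Rightarrow> real" where
  "alpha m k = (if 2 * k \<le> m then per4 0 (-1) 0 1 k else per4 (-1/2) (-1) (-1/2) 0 (m - k))"

definition mid :: "nat \<Rightarrow> nat" where "mid m = m - m div 2"

definition gam :: "nat \<Rightarrow> real" where
  "gam m = (if m mod 4 = 3 then 0 else if m mod 8 \<le> 2 then 1 else -1)"

definition ap :: "nat \<Rightarrow> nat \<Rightarrow> real" where "ap m k = (if 2 \<le> k then alpha m k else 0)"

lemma nf_point:
  assumes i: "i < m" and k: "k < m"
  shows "nf m k i * ap m k = ap m k * (if k = i \<and> 2 * k \<le> m then 1 else 0)
    - ap m k * (if k = m + 1 - i \<and> 2 * k \<le> m then 1 else 0)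
    - 2 * (ap m k * (if k = m - i \<and> m < 2 * k then 1 else 0))
    - 2 * (ap m k * (if k = i + 1 \<and> m < 2 * k then 1 else 0))
    + 2 * (ap m k * (if k = i + 1 \<and> m < 2 * k \<and> m = 2 * i + 1 then 1 else 0))"
proof (cases "2 \<le> k")
  case False
  then show ?thesis by (simp add: ap_def)
next
  case True
  have a: "ap m k = alpha m k" using True by (simp add: ap_def)
  have q: "(i = k) = (k = i)" "(i + k = m + 1) = (k = m + 1 - i)" "(i + k = m) = (k = m - i)" "(i + 1 = k) = (k = i + 1)"
    using i k by auto
  show ?thesis
  proof (cases "2 * k \<le> m")
    case True
    have n: "nf m k i = (if k = i then 1 else 0) - (if k = m + 1 - i then 1 else 0)"
      using True \<open>2 \<le> k\<close> q by (simp add: nf_def)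
    show ?thesis unfolding n a using True by simp
  next
    case False
    have n: "nf m k i = (if k = m - i \<or> k = i + 1 then -2 else 0)"
      using False \<open>2 \<le> k\<close> q by (simp add: nf_def)
    have r: "(k = m - i \<and> k = i + 1) = (k = i + 1 \<and> m = 2 * i + 1)" using i k by auto
    show ?thesis unfolding n a using False r by auto
  qed
qed


lemma S_expl:
  assumes i: "i < m"
  shows "(\<Sum>k<m. nf m k i * ap m k) =
    (if i < m \<and> 2 * i \<le> m then ap m i * 1 else 0)
    - (if m + 1 - i < m \<and> 2 * (m + 1 - i) \<le> m then ap m (m + 1 - i) * 1 else 0)
    - 2 * (if m - i < m \<and> m < 2 * (m - i) then ap m (m - i) * 1 else 0)
    - 2 * (if i + 1 < m \<and> m < 2 * (i + 1) then ap m (i + 1) * 1 else 0)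
    + 2 * (if i + 1 < m \<and> m < 2 * (i + 1) \<and> m = 2 * i + 1 then ap m (i + 1) * 1 else 0)"
proof -
  have "(\<Sum>k<m. nf m k i * ap m k) = (\<Sum>k<m. ap m k * (if k = i \<and> 2 * k \<le> m then 1 else 0)
    - ap m k * (if k = m + 1 - i \<and> 2 * k \<le> m then 1 else 0)
    - 2 * (ap m k * (if k = m - i \<and> m < 2 * k then 1 else 0))
    - 2 * (ap m k * (if k = i + 1 \<and> m < 2 * k then 1 else 0))
    + 2 * (ap m k * (if k = i + 1 \<and> m < 2 * k \<and> m = 2 * i + 1 then 1 else 0)))"
    by (rule sum.cong) (use nf_point[OF i] in auto)
  also have "\<dots> = (\<Sum>k<m. ap m k * (if k = i \<and> 2 * k \<le> m then 1 else 0))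
    - (\<Sum>k<m. ap m k * (if k = m + 1 - i \<and> 2 * k \<le> m then 1 else 0))
    - 2 * (\<Sum>k<m. ap m k * (if k = m - i \<and> m < 2 * k then 1 else 0))
    - 2 * (\<Sum>k<m. ap m k * (if k = i + 1 \<and> m < 2 * k then 1 else 0))
    + 2 * (\<Sum>k<m. ap m k * (if k = i + 1 \<and> m < 2 * k \<and> m = 2 * i + 1 then 1 else 0))"
    by (simp only: sum.distrib sum_subtractf sum_distrib_left)
  also have "\<dots> = (if i < m \<and> 2 * i \<le> m then ap m i * 1 else 0)
    - (if m + 1 - i < m \<and> 2 * (m + 1 - i) \<le> m then ap m (m + 1 - i) * 1 else 0)
    - 2 * (if m - i < m \<and> m < 2 * (m - i) then ap m (m - i) * 1 else 0)
    - 2 * (if i + 1 < m \<and> m < 2 * (i + 1) then ap m (i + 1) * 1 else 0)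
    + 2 * (if i + 1 < m \<and> m < 2 * (i + 1) \<and> m = 2 * i + 1 then ap m (i + 1) * 1 else 0)"
    by (simp only: sum_delta_cond[OF finite_lessThan] lessThan_iff)
  finally show ?thesis .
qed


lemma per4_0: "x mod 4 = 0 \<Longrightarrow> per4 a b c e x = a" by (simp add: per4_def)
lemma per4_1: "x mod 4 = 1 \<Longrightarrow> per4 a b c e x = b" by (simp add: per4_def)
lemma per4_2: "x mod 4 = 2 \<Longrightarrow> per4 a b c e x = c" by (simp add: per4_def)
lemma per4_3: "x mod 4 = 3 \<Longrightarrow> per4 a b c e x = e" by (simp add: per4_def)

lemma mod4_succ: "(d + 1) mod 4 = (d mod 4 + 1) mod 4" for d :: nat
  by (simp add: mod_simps)
lemma mod4_pred: "1 \<le> d \<Longrightarrow> (d - 1) mod 4 = (d mod 4 + 3) mod 4" for d :: nat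
proof -
  assume "1 \<le> d" then obtain e where "d = e + 1" by (metis le_add_diff_inverse2)
  then show ?thesis by (simp add: mod_simps)
qed

lemma mod4_cases:
  fixes x :: nat
  obtains "x mod 4 = 0" | "x mod 4 = 1" | "x mod 4 = 2" | "x mod 4 = 3" by linarith

lemma row_small:
  assumes m: "3 \<le> m" and i1: "1 \<le> i" and im: "i < mid m"
  shows "zf m 1 i - (\<Sum>k<m. nf m k i * ap m k) = 0"
proof -
  have i: "i < m" using im by (simp add: mid_def)
  have c1: "(i < m \<and> 2 * i \<le> m) = True" using im by (auto simp: mid_def)
  have c2: "(m + 1 - i < m \<and> 2 * (m + 1 - i) \<le> m) = False" using im by (auto simp: mid_def)
  have c3: "(m - i < m \<and> m < 2 * (m - i)) = True" using im i1 by (auto simp: mid_def)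
  have c45: "(i + 1 < m \<and> m < 2 * (i + 1) \<and> m = 2 * i + 1) = (i + 1 < m \<and> m < 2 * (i + 1))"
    using im by (auto simp: mid_def)
  have a3: "ap m (m - i) = per4 (-1/2) (-1) (-1/2) 0 i"
  proof -
    have "2 \<le> m - i" "\<not> 2 * (m - i) \<le> m" "m - (m - i) = i" using im m by (auto simp: mid_def)
    then show ?thesis by (simp add: ap_def alpha_def)
  qed
  have a1: "ap m i = (if i = 1 then 0 else per4 0 (-1) 0 1 i)"
    using im i1 by (auto simp: ap_def alpha_def mid_def)
  have z: "zf m 1 i = (if i = 1 then 2 else 1)" using im i1 m by (auto simp: zf_def mid_def)
  have S: "(\<Sum>k<m. nf m k i * ap m k) = ap m i - 2 * ap m (m - i)"
    unfolding S_expl[OF i] c1 c2 c3 c45 by simp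
  show ?thesis unfolding S a1 a3 z
    by (rule mod4_cases[of i]) (auto simp: per4_0 per4_1 per4_2 per4_3)
qed


lemma row_large:
  assumes m: "3 \<le> m" and im: "mid m < i" and i: "i < m"
  shows "zf m 1 i - (\<Sum>k<m. nf m k i * ap m k) = 0"
proof -
  define d where "d = m - i"
  have d1: "1 \<le> d" and d2: "2 * d < m" and di: "i = m - d" using im i by (auto simp: d_def mid_def)
  have h2: "m div 2 * 2 \<le> m" by simp
  have d3: "2 * d + 2 \<le> m" using im i h2 unfolding mid_def d_def by linarith
  have c1: "(i < m \<and> 2 * i \<le> m) = False" using im by (auto simp: mid_def)
  have c2: "(m + 1 - i < m \<and> 2 * (m + 1 - i) \<le> m) = True" using im i d3 d1 by (auto simp: mid_def d_def)
  have c3: "(m - i < m \<and> m < 2 * (m - i)) = False" using d2 by (auto simp: d_def)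
  have c4: "(i + 1 < m \<and> m < 2 * (i + 1)) = (2 \<le> d)" using im i by (auto simp: mid_def d_def)
  have c5: "(i + 1 < m \<and> m < 2 * (i + 1) \<and> m = 2 * i + 1) = False" using im by (auto simp: mid_def)
  have a2: "ap m (m + 1 - i) = per4 0 (-1) 0 1 (d + 1)"
  proof -
    have "m + 1 - i = d + 1" "2 \<le> d + 1" "2 * (d + 1) \<le> m" using d1 d3 i by (auto simp: d_def)
    then show ?thesis by (simp add: ap_def alpha_def)
  qed
  have a4: "2 \<le> d \<Longrightarrow> ap m (i + 1) = per4 (-1/2) (-1) (-1/2) 0 (d - 1)"
  proof -
    assume "2 \<le> d"
    have "2 \<le> i + 1" "\<not> 2 * (i + 1) \<le> m" "m - (i + 1) = d - 1" using im i m d2 by (auto simp: mid_def d_def)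
    then show ?thesis by (simp add: ap_def alpha_def)
  qed
  have z: "zf m 1 i = (if 2 \<le> d then 1 else 0)" using im i m by (auto simp: zf_def mid_def d_def)
  have S: "(\<Sum>k<m. nf m k i * ap m k) = - ap m (m + 1 - i) - 2 * (if 2 \<le> d then ap m (i + 1) else 0)"
    unfolding S_expl[OF i] c1 c2 c3 c4 c5 by simp
  show ?thesis
  proof (cases "2 \<le> d")
    case False
    then have "d = 1" using d1 by simp
    then show ?thesis unfolding S z a2 by (simp add: per4_def)
  next
    case True
    have G: "(1::real) + per4 0 (-1) 0 1 (d + 1) + 2 * per4 (-1/2) (-1) (-1/2) 0 (d - 1) = 0"
    proof (rule mod4_cases[of d])
      assume h: "d mod 4 = 0"
      have "(d + 1) mod 4 = 1" "(d - 1) mod 4 = 3" using h True using mod4_succ[of d] mod4_pred[of d] by simp_all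
      then show ?thesis by (simp add: per4_1 per4_3)
    next
      assume h: "d mod 4 = 1"
      have "(d + 1) mod 4 = 2" "(d - 1) mod 4 = 0" using h True using mod4_succ[of d] mod4_pred[of d] by simp_all
      then show ?thesis by (simp add: per4_2 per4_0)
    next
      assume h: "d mod 4 = 2"
      have "(d + 1) mod 4 = 3" "(d - 1) mod 4 = 1" using h True using mod4_succ[of d] mod4_pred[of d] by simp_all
      then show ?thesis by (simp add: per4_3 per4_1)
    next
      assume h: "d mod 4 = 3"
      have "(d + 1) mod 4 = 0" "(d - 1) mod 4 = 2" using h True using mod4_succ[of d] mod4_pred[of d] by simp_all
      then show ?thesis by (simp add: per4_0 per4_2)
    qed
    show ?thesis unfolding S z a2 a4[OF True] using True G by simp
  qed
qed


lemma mid_eq: "mid m = m div 2 + m mod 2"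
  unfolding mid_def using div_mult_mod_eq[of m 2] by linarith

lemma div2_8: "(8 * q + r) div 2 = 4 * q + r div 2" for q r :: nat by simp
lemma mod4_8: "(8 * q + r) mod 4 = r mod 4" for q r :: nat
proof -
  have "(8 * q + r) mod 4 = (r + 4 * (2 * q)) mod 4" by (simp add: algebra_simps)
  also have "\<dots> = r mod 4" by (rule mod_mult_self2)
  finally show ?thesis .
qed
lemma mod8_8: "(8 * q + r) mod 8 = r mod 8" for q r :: nat
  by simp
lemma mod4_4: "(4 * q + r) mod 4 = r mod 4" for q r :: nat
  by simp
lemma mod4_s1: "Suc (4 * q) mod 4 = 1" for q :: nat
proof - have e: "Suc (4 * q) = 4 * q + 1" by simp show ?thesis unfolding e mod4_4 by simp qed
lemma mod4_s2: "Suc (Suc (4 * q)) mod 4 = 2" for q :: nat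
proof - have e: "Suc (Suc (4 * q)) = 4 * q + 2" by simp show ?thesis unfolding e mod4_4 by simp qed
lemma mod4_s3: "Suc (Suc (Suc (4 * q))) mod 4 = 3" for q :: nat
proof - have e: "Suc (Suc (Suc (4 * q))) = 4 * q + 3" by simp show ?thesis unfolding e mod4_4 by simp qed
lemmas mod4_s = mod4_s1 mod4_s2 mod4_s3

lemma row_mid:
  assumes m: "3 \<le> m"
  shows "zf m 1 (mid m) - (\<Sum>k<m. nf m k (mid m) * ap m k) = gam m"
proof -
  define a where "a = m div 2"
  define b where "b = m mod 2"
  have h1: "m = 2 * a + b" unfolding a_def b_def by simp
  have h2: "b \<le> 1" unfolding b_def by simp
  have md: "mid m = a + b" unfolding mid_eq a_def b_def ..
  have ev: "even m = (b = 0)" unfolding b_def by (simp add: even_iff_mod_2_eq_zero)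
  have a2: "1 \<le> a" using m h1 h2 by linarith
  have i: "mid m < m" using md h1 a2 by linarith
  have c1: "(mid m < m \<and> 2 * mid m \<le> m) = even m" unfolding ev md using h1 h2 a2 by auto
  have c2: "(m + 1 - mid m < m \<and> 2 * (m + 1 - mid m) \<le> m) = False" unfolding md using h1 h2 by auto
  have c3: "(m - mid m < m \<and> m < 2 * (m - mid m)) = False" unfolding md using h1 h2 by auto
  have c4: "(mid m + 1 < m \<and> m < 2 * (mid m + 1)) = (4 \<le> m)" unfolding md using h1 h2 by auto
  have c5: "(mid m + 1 < m \<and> m < 2 * (mid m + 1) \<and> m = 2 * mid m + 1) = False" unfolding md using h1 h2 by auto
  have ap1: "even m \<Longrightarrow> ap m (mid m) = per4 0 (-1) 0 1 (mid m)"
  proof -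
    assume e: "even m"
    have "2 \<le> mid m" "2 * mid m \<le> m" using e a2 h1 h2 md ev m by auto
    then show ?thesis by (simp add: ap_def alpha_def)
  qed
  have ap4: "4 \<le> m \<Longrightarrow> ap m (mid m + 1) = per4 (-1/2) (-1) (-1/2) 0 (m - (mid m + 1))"
  proof -
    assume "4 \<le> m"
    have "2 \<le> mid m + 1" "\<not> 2 * (mid m + 1) \<le> m" using a2 h1 h2 md by auto
    then show ?thesis by (simp add: ap_def alpha_def)
  qed
  have z: "zf m 1 (mid m) = (if 4 \<le> m then 1 else 0)"
  proof -
    have "mid m \<noteq> 1" "2 \<le> mid m" "(mid m + 2 \<le> m) = (4 \<le> m)" using a2 h1 h2 md m by auto
    then show ?thesis by (simp add: zf_def)
  qed
  have S: "(\<Sum>k<m. nf m k (mid m) * ap m k) = (if even m then ap m (mid m) else 0) - 2 * (if 4 \<le> m then ap m (mid m + 1) else 0)"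
    unfolding S_expl[OF i] c1 c2 c3 c4 c5 by simp
  show ?thesis
  proof (cases "m = 3")
    case True
    then show ?thesis unfolding S z by (simp add: gam_def)
  next
    case False
    then have m4: "4 \<le> m" using m by simp
    define q where "q = m div 8"
    have r8: "m mod 8 < 8" by simp
    have mq: "m = 8 * q + m mod 8" unfolding q_def by simp
    have G: "1 - ((if even m then per4 0 (-1) 0 1 (mid m) else 0) - 2 * per4 (-1/2) (-1) (-1/2) 0 (m - (mid m + 1))) = gam m"
    proof -
      consider "m mod 8 = 0" | "m mod 8 = 1" | "m mod 8 = 2" | "m mod 8 = 3" | "m mod 8 = 4" | "m mod 8 = 5" | "m mod 8 = 6" | "m mod 8 = 7"
        using r8 by linarith
      then show ?thesis
      proof cases
        case 1 with mq have e: "m = 8 * q" by simp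
        have "1 \<le> q" using e m4 by simp
        then obtain q' where "q = q' + 1" by (metis le_add_diff_inverse2)
        then have e': "m = 8 * q' + 8" using e by simp
        show ?thesis unfolding e' by (simp add: mid_def gam_def per4_def div2_8 mod4_8 mod8_8 mod4_4 mod4_s)
      next
        case 2 with mq have e: "m = 8 * q + 1" by simp
        have "1 \<le> q" using e m4 by simp
        then obtain q' where "q = q' + 1" by (metis le_add_diff_inverse2)
        then have e': "m = 8 * q' + 9" using e by simp
        show ?thesis unfolding e' by (simp add: mid_def gam_def per4_def div2_8 mod4_8 mod8_8 mod4_4 mod4_s)
      next
        case 3 with mq have e: "m = 8 * q + 2" by simp
        have "1 \<le> q" using e m4 by simp
        then obtain q' where "q = q' + 1" by (metis le_add_diff_inverse2)
        then have e': "m = 8 * q' + 10" using e by simp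
        show ?thesis unfolding e' by (simp add: mid_def gam_def per4_def div2_8 mod4_8 mod8_8 mod4_4 mod4_s)
      next
        case 4 with mq have e: "m = 8 * q + 3" by simp
        have "1 \<le> q" using e m4 by simp
        then obtain q' where "q = q' + 1" by (metis le_add_diff_inverse2)
        then have e': "m = 8 * q' + 11" using e by simp
        show ?thesis unfolding e' by (simp add: mid_def gam_def per4_def div2_8 mod4_8 mod8_8 mod4_4 mod4_s)
      next
        case 5 with mq have e: "m = 8 * q + 4" by simp
        show ?thesis unfolding e by (simp add: mid_def gam_def per4_def div2_8 mod4_8 mod8_8 mod4_4 mod4_s)
      next
        case 6 with mq have e: "m = 8 * q + 5" by simp
        show ?thesis unfolding e by (simp add: mid_def gam_def per4_def div2_8 mod4_8 mod8_8 mod4_4 mod4_s)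
      next
        case 7 with mq have e: "m = 8 * q + 6" by simp
        show ?thesis unfolding e by (simp add: mid_def gam_def per4_def div2_8 mod4_8 mod8_8 mod4_4 mod4_s)
      next
        case 8 with mq have e: "m = 8 * q + 7" by simp
        show ?thesis unfolding e by (simp add: mid_def gam_def per4_def div2_8 mod4_8 mod8_8 mod4_4 mod4_s)
      qed
    qed
    show ?thesis unfolding S z using m4 G ap1 ap4[OF m4] by auto
  qed
qed



definition NFmat :: "nat \<Rightarrow> real \<Rightarrow> real mat" where
  "NFmat m g = mat m m (\<lambda>(i, j). if j = 1 then (if i = mid m then g else 0) else nf m j i)"

lemma row_clear:
  assumes m: "3 \<le> m" and i: "i < m"
  shows "zf m 1 i - (\<Sum>k<m. nf m k i * ap m k) = (if i = mid m then gam m else 0)"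
proof -
  consider "i = 0" | "1 \<le> i" "i < mid m" | "i = mid m" | "mid m < i" by linarith
  then show ?thesis
  proof cases
    case 1
    have mi: "mid m \<noteq> 0" using m by (simp add: mid_def)
    have "(\<Sum>k<m. nf m k i * ap m k) = 0"
      unfolding S_expl[OF i] using 1 m by (simp add: ap_def)
    moreover have "zf m 1 i = 0" using 1 by (simp add: zf_def)
    ultimately show ?thesis using 1 mi by simp
  next
    case 2
    then show ?thesis using row_small[OF m] by simp
  next
    case 3
    then show ?thesis using row_mid[OF m] by simp
  next
    case 4
    then have "i \<noteq> mid m" by simp
    then show ?thesis using row_large[OF m 4 i] by simp
  qed
qed

lemma N_NF:
  assumes m: "3 \<le> m"
  shows "Nmat m * mat m m (\<lambda>(k, j). (if k = j then 1 else 0) + (if j = 1 then - ap m k else 0)) = NFmat m (gam m)"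
    (is "_ * ?T = _")
    and "det (NFmat m (gam m)) = det (Nmat m)"
proof -
  have N: "Nmat m \<in> carrier_mat m m" by (simp add: Nmat_def)
  show eq: "Nmat m * ?T = NFmat m (gam m)"
  proof (rule eq_matI)
    fix i j assume i: "i < dim_row (NFmat m (gam m))" and j: "j < dim_col (NFmat m (gam m))"
    then have i': "i < m" and j': "j < m" by (auto simp: NFmat_def)
    have "(Nmat m * ?T) $$ (i, j) = Nmat m $$ (i, j) + (\<Sum>k<m. Nmat m $$ (i, k) * (if j = 1 then - ap m k else 0))"
      by (rule mult_unit_entry[OF N i' j'])
    also have "(\<Sum>k<m. Nmat m $$ (i, k) * (if j = 1 then - ap m k else 0)) = (if j = 1 then - (\<Sum>k<m. nf m k i * ap m k) else 0)"
      using i' by (auto simp: Nmat_def sum_negf intro!: sum.cong)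
    finally show "(Nmat m * ?T) $$ (i, j) = NFmat m (gam m) $$ (i, j)"
      using i' j' row_clear[OF m i'] by (auto simp: Nmat_def NFmat_def nf_def)
  qed (auto simp: Nmat_def NFmat_def)
  have "det (Nmat m * ?T) = det (Nmat m)"
    by (rule det_mult_unit_tri[OF N]) (auto simp: ap_def)
  then show "det (NFmat m (gam m)) = det (Nmat m)" using eq by simp
qed


definition piv :: "nat \<Rightarrow> nat \<Rightarrow> nat" where
  "piv m j = (if j = 0 then 0 else if j = 1 then mid m else if 2 * j \<le> m then m + 1 - j else m - j)"

definition vip :: "nat \<Rightarrow> nat \<Rightarrow> nat" where
  "vip m i = (if i = 0 then 0 else if i = mid m then 1 else if mid m < i then m + 1 - i else m - i)"

lemma piv_facts:
  assumes m: "3 \<le> m"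
  shows "\<And>j. j < m \<Longrightarrow> piv m j < m"
    and "\<And>i. i < m \<Longrightarrow> vip m i < m"
    and "\<And>j. j < m \<Longrightarrow> vip m (piv m j) = j"
    and "\<And>i. i < m \<Longrightarrow> piv m (vip m i) = i"
proof -
  define a where "a = m div 2"
  define b where "b = m mod 2"
  have h1: "m = 2 * a + b" unfolding a_def b_def by simp
  have h2: "b \<le> 1" unfolding b_def by simp
  have md: "mid m = a + b" unfolding mid_eq a_def b_def ..
  show "\<And>j. j < m \<Longrightarrow> piv m j < m" unfolding piv_def md using h1 h2 m by auto
  show "\<And>i. i < m \<Longrightarrow> vip m i < m" unfolding vip_def md using h1 h2 m by auto
  show "\<And>j. j < m \<Longrightarrow> vip m (piv m j) = j" unfolding piv_def vip_def md using h1 h2 m by auto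
  show "\<And>i. i < m \<Longrightarrow> piv m (vip m i) = i" unfolding piv_def vip_def md using h1 h2 m by auto
qed


lemma NF_nz:
  assumes m: "3 \<le> m" and i: "i < m" and j: "j < m" and nz: "NFmat m g $$ (i, j) \<noteq> 0"
  shows "i = piv m j \<or> min (piv m j) (m - piv m j) < min i (m - i)"
proof -
  define a where "a = m div 2"
  define b where "b = m mod 2"
  have h1: "m = 2 * a + b" unfolding a_def b_def by simp
  have h2: "b \<le> 1" unfolding b_def by simp
  have md: "mid m = a + b" unfolding mid_eq a_def b_def ..
  consider "j = 0" | "j = 1" | "2 \<le> j" "2 * j \<le> m" | "2 \<le> j" "m < 2 * j" by linarith
  then show ?thesis
  proof cases
    case 1
    then show ?thesis using i by (auto simp: piv_def)
  next
    case 2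
    then show ?thesis using nz i j by (auto simp: piv_def NFmat_def split: if_splits)
  next
    case 3
    have e: "NFmat m g $$ (i, j) = (if i = j then 1 else 0) - (if i + j = m + 1 then 1 else 0)"
      using 3 i j by (simp add: NFmat_def nf_def)
    have "i = j \<or> i + j = m + 1" using nz unfolding e by (auto split: if_splits)
    then show ?thesis using 3 i j by (auto simp: piv_def)
  next
    case 4
    have e: "NFmat m g $$ (i, j) = (if i + j = m \<or> i + 1 = j then -2 else 0)"
      using 4 i j by (simp add: NFmat_def nf_def)
    have "i + j = m \<or> i + 1 = j" using nz unfolding e by (auto split: if_splits)
    then show ?thesis using 4 i j by (auto simp: piv_def)
  qed
qed



lemma prod_first_two:
  fixes f :: "nat \<Rightarrow> real"
  assumes "2 \<le> m"
  shows "(\<Prod>j<m. f j) = f 0 * f 1 * (\<Prod>j\<in>{2..<m}. f j)"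
proof -
  have "(\<Prod>j<m. f j) = (\<Prod>j\<in>{0..<m}. f j)" by (simp add: lessThan_atLeast0)
  also have "\<dots> = f 0 * (\<Prod>j\<in>{Suc 0..<m}. f j)" using assms by (subst prod.atLeast_Suc_lessThan) auto
  also have "(\<Prod>j\<in>{Suc 0..<m}. f j) = f 1 * (\<Prod>j\<in>{Suc (Suc 0)..<m}. f j)" using assms by (subst prod.atLeast_Suc_lessThan) auto
  finally show ?thesis by (simp add: numeral_2_eq_2 mult.assoc)
qed

lemma prod_12:
  assumes m: "3 \<le> m"
  shows "(\<Prod>j\<in>{2..<m}. (if 2 * j \<le> m then (1::real) else 2)) = 2 ^ (m - (m div 2 + 1))"
proof -
  have s: "2 \<le> m div 2 + 1" "m div 2 + 1 \<le> m" using m by auto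
  have "(\<Prod>j\<in>{2..<m}. (if 2 * j \<le> m then (1::real) else 2))
     = (\<Prod>j\<in>{2..<m div 2 + 1}. (if 2 * j \<le> m then (1::real) else 2)) * (\<Prod>j\<in>{m div 2 + 1..<m}. (if 2 * j \<le> m then (1::real) else 2))"
    by (rule prod.atLeastLessThan_concat[OF s, symmetric])
  also have "(\<Prod>j\<in>{2..<m div 2 + 1}. (if 2 * j \<le> m then (1::real) else 2)) = 1"
    by (rule prod.neutral) auto
  also have "(\<Prod>j\<in>{m div 2 + 1..<m}. (if 2 * j \<le> m then (1::real) else 2)) = (\<Prod>j\<in>{m div 2 + 1..<m}. 2)"
    by (rule prod.cong) auto
  also have "\<dots> = 2 ^ (m - (m div 2 + 1))" by simp
  finally show ?thesis by simp
qed

lemma det_NF: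
  assumes m: "3 \<le> m"
  shows "\<bar>det (NFmat m g)\<bar> = \<bar>g\<bar> * 2 ^ (m - (m div 2 + 1))"
proof -
  have NF: "NFmat m g \<in> carrier_mat m m" by (simp add: NFmat_def)
  have "\<bar>det (NFmat m g)\<bar> = \<bar>\<Prod>j<m. NFmat m g $$ (piv m j, j)\<bar>"
    by (rule det_pivot[OF NF piv_facts[OF m], where key = "\<lambda>r. min r (m - r)"]) (use NF_nz[OF m] in auto)
  also have "(\<Prod>j<m. NFmat m g $$ (piv m j, j)) = NFmat m g $$ (piv m 0, 0) * NFmat m g $$ (piv m 1, 1)
      * (\<Prod>j\<in>{2..<m}. NFmat m g $$ (piv m j, j))"
    by (rule prod_first_two) (use m in simp)
  also have "NFmat m g $$ (piv m 0, 0) = 1" using m by (simp add: NFmat_def piv_def nf_def)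
  also have "NFmat m g $$ (piv m 1, 1) = g"
    using piv_facts(1)[OF m, of 1] m by (simp add: NFmat_def piv_def)
  also have "(\<Prod>j\<in>{2..<m}. NFmat m g $$ (piv m j, j)) = (\<Prod>j\<in>{2..<m}. (if 2 * j \<le> m then -1 else -2))"
  proof (rule prod.cong)
    fix j assume j: "j \<in> {2..<m}"
    have pl: "piv m j < m" using piv_facts(1)[OF m, of j] j by simp
    show "NFmat m g $$ (piv m j, j) = (if 2 * j \<le> m then -1 else -2)"
    proof (cases "2 * j \<le> m")
      case True
      then have "piv m j = m + 1 - j" using j by (simp add: piv_def)
      then show ?thesis using True j pl by (simp add: NFmat_def nf_def)
    next
      case False
      then have "piv m j = m - j" using j by (simp add: piv_def)
      then show ?thesis using False j pl by (simp add: NFmat_def nf_def)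
    qed
  qed simp
  finally have "\<bar>det (NFmat m g)\<bar> = \<bar>g\<bar> * (\<Prod>j\<in>{2..<m}. \<bar>(if 2 * j \<le> m then -1 else -2) :: real\<bar>)"
    by (simp add: abs_mult abs_prod)
  also have "(\<Prod>j\<in>{2..<m}. \<bar>(if 2 * j \<le> m then -1 else -2) :: real\<bar>) = (\<Prod>j\<in>{2..<m}. (if 2 * j \<le> m then (1::real) else 2))"
    by (rule prod.cong) auto
  finally show ?thesis using prod_12[OF m] by simp
qed


definition T0 :: "nat \<Rightarrow> real mat" where
  "T0 m = mat m m (\<lambda>(k, j). (if k = j then 1 else 0) + (if k = j then 0 else rc j k))"
definition T1 :: "nat \<Rightarrow> real mat" where
  "T1 m = mat m m (\<lambda>(k, j). (if k = j then 1 else 0) + (if k = m + 1 - j \<and> (m + 1 < 2 * j \<and> j < m) then 1 else 0))"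
definition T2 :: "nat \<Rightarrow> real mat" where
  "T2 m = mat m m (\<lambda>(k, j). (if k = j then 1 else 0) + (if k = m + 1 - j \<and> (2 \<le> j \<and> 2 * j < m + 1) then - 1 / 2 else 0))"
definition T3 :: "nat \<Rightarrow> real mat" where
  "T3 m = mat m m (\<lambda>(k, j). (if k = j then 1 else 0) + (if j = 1 then - ap m k else 0))"

lemma T_facts:
  assumes m: "3 \<le> m"
  shows "Kmat m * (T0 m * T1 m * T2 m * T3 m) = NFmat m (gam m)"
    and "det (T0 m * T1 m * T2 m * T3 m) = 1"
    and "T0 m * T1 m * T2 m * T3 m \<in> carrier_mat m m"
    and "det (NFmat m (gam m)) = det (Kmat m)"
proof -
  have c: "T0 m \<in> carrier_mat m m" "T1 m \<in> carrier_mat m m" "T2 m \<in> carrier_mat m m" "T3 m \<in> carrier_mat m m"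
    "Kmat m \<in> carrier_mat m m" by (simp_all add: T0_def T1_def T2_def T3_def Kmat_def)
  have d: "det (T0 m) = 1" "det (T1 m) = 1" "det (T2 m) = 1" "det (T3 m) = 1"
    unfolding T0_def T1_def T2_def T3_def by (rule det_unit_tri; auto simp: rc_zero ap_def)+
  have "Kmat m * (T0 m * T1 m * T2 m * T3 m) = ((Kmat m * T0 m) * T1 m * T2 m) * T3 m"
    using c by (simp add: assoc_mult_mat[of _ m m _ m _ m])
  also have "\<dots> = NFmat m (gam m)"
    using det_K_Z(1)[OF m] Z_N1(1)[OF m] N1_N(1)[OF m] N_NF(1)[OF m] unfolding T0_def T1_def T2_def T3_def by simp
  finally show "Kmat m * (T0 m * T1 m * T2 m * T3 m) = NFmat m (gam m)" .
  show "det (T0 m * T1 m * T2 m * T3 m) = 1"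
    using c d by (simp add: det_mult[of _ m])
  show "T0 m * T1 m * T2 m * T3 m \<in> carrier_mat m m"
    using mult_carrier_mat[OF mult_carrier_mat[OF mult_carrier_mat[OF c(1) c(2)] c(3)] c(4)] .
  show "det (NFmat m (gam m)) = det (Kmat m)"
    using det_K_Z(2)[OF m] Z_N1(2)[OF m] N1_N(2)[OF m] N_NF(2)[OF m] by simp
qed



lemma four_dvd_iff:
  fixes n :: nat
  assumes "1 \<le> n"
  shows "4 dvd n \<longleftrightarrow> (n - 1) mod 4 = 3"
proof -
  obtain k where k: "n = k + 1" using assms by (metis le_add_diff_inverse2)
  have "4 dvd n \<longleftrightarrow> (k + 1) mod 4 = 0" unfolding k by (simp add: dvd_eq_mod_eq_0)
  also have "\<dots> \<longleftrightarrow> (k mod 4 + 1) mod 4 = 0" using mod4_succ[of k] by simp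
  also have "\<dots> \<longleftrightarrow> k mod 4 = 3"
    by (rule mod4_cases[of k]) simp_all
  finally show ?thesis using k by simp
qed

lemma exp_eq:
  fixes n :: nat
  assumes "4 \<le> n"
  shows "(n - 1) - ((n - 1) div 2 + 1) = n div 2 - 1"
proof (cases "even n")
  case True
  then obtain a where a: "n = 2 * a" by (rule evenE)
  have "1 \<le> a" using a assms by simp
  then obtain a' where a': "a = a' + 1" by (metis le_add_diff_inverse2)
  have "n - 1 = 2 * a' + 1" using a a' by simp
  then show ?thesis using a a' by simp
next
  case False
  then obtain a where a: "n = 2 * a + 1" by (rule oddE)
  then show ?thesis by simp
qed

theorem theorem1p2:
  fixes n :: nat
  assumes "n \<ge> 4"
  shows "(\<not> 4 dvd n \<longrightarrow>
            det (walk_mat_hat n) = 2 ^ (n div 2 - 1) \<or>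
            det (walk_mat_hat n) = - (2 ^ (n div 2 - 1)))
       \<and> (4 dvd n \<longrightarrow> vec_space.rank (n - 1) (walk_mat_hat n) = n - 2)"
proof -
  define m where "m = n - 1"
  have m: "3 \<le> m" using assms by (simp add: m_def)
  have W: "walk_mat_hat n = Kmat m" unfolding m_def by (rule walk_hat_K[OF assms])
  have dK: "\<bar>det (Kmat m)\<bar> = \<bar>gam m\<bar> * 2 ^ (n div 2 - 1)"
    using det_NF[OF m, of "gam m"] T_facts(4)[OF m] exp_eq[OF assms] by (simp add: m_def)
  have dv: "4 dvd n \<longleftrightarrow> m mod 4 = 3" unfolding m_def using assms by (intro four_dvd_iff) simp
  have K: "Kmat m \<in> carrier_mat m m" by (simp add: Kmat_def)
  show ?thesis
  proof (intro conjI impI)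
    assume nd: "\<not> 4 dvd n"
    then have "\<bar>gam m\<bar> = 1" using dv by (auto simp: gam_def)
    then have "\<bar>det (walk_mat_hat n)\<bar> = 2 ^ (n div 2 - 1)" using dK W by simp
    then show "det (walk_mat_hat n) = 2 ^ (n div 2 - 1) \<or> det (walk_mat_hat n) = - (2 ^ (n div 2 - 1))"
      by (auto simp: abs_if split: if_splits)
  next
    assume d4: "4 dvd n"
    then have g0: "gam m = 0" using dv by (simp add: gam_def)
    define X where "X = T0 m * T1 m * T2 m * T3 m"
    have X: "X \<in> carrier_mat m m" "det X = 1" "Kmat m * X = NFmat m 0"
      using T_facts[OF m] g0 unfolding X_def by simp_all
    have "X \<in> Units (ring_mat TYPE(real) m ())"
      by (rule det_non_zero_imp_unit[OF X(1)]) (simp add: X(2))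
    then obtain Xi where Xi: "Xi \<in> carrier_mat m m" "Xi * X = 1\<^sub>m m" "X * Xi = 1\<^sub>m m"
      unfolding Units_def ring_mat_def by auto
    have KXi: "Kmat m = NFmat m 0 * Xi"
    proof -
      have "Kmat m = Kmat m * (X * Xi)" using Xi(3) K by simp
      also have "\<dots> = (Kmat m * X) * Xi" using K X(1) Xi(1) by (simp add: assoc_mult_mat[of _ m m _ m _ m])
      finally show ?thesis using X(3) by simp
    qed
    define E0 where "E0 = mat m m (\<lambda>(i, j). if j = 1 \<and> i = mid m then (1::real) else 0)"
    have E0c: "E0 \<in> carrier_mat m m" by (simp add: E0_def)
    have NF1: "NFmat m 1 = NFmat m 0 + E0"
      by (rule eq_matI) (auto simp: NFmat_def E0_def)
    have NF0c: "NFmat m 0 \<in> carrier_mat m m" by (simp add: NFmat_def)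
    have sum_eq: "NFmat m 1 * Xi = Kmat m + E0 * Xi"
      unfolding NF1 KXi by (rule add_mult_distrib_mat[OF NF0c E0c Xi(1)])
    have detXi: "det Xi \<noteq> 0"
    proof
      assume "det Xi = 0"
      then have "det (X * Xi) = 0" using det_mult[OF X(1) Xi(1)] by simp
      then show False using Xi(3) by simp
    qed
    have "\<bar>det (NFmat m 1)\<bar> = 2 ^ (m - (m div 2 + 1))" using det_NF[OF m, of 1] by simp
    then have dNF1: "det (NFmat m 1) \<noteq> 0" by auto
    have NF1c: "NFmat m 1 \<in> carrier_mat m m" by (simp add: NFmat_def)
    have "det (Kmat m + E0 * Xi) \<noteq> 0"
      unfolding sum_eq[symmetric] det_mult[OF NF1c Xi(1)] using dNF1 detXi by simp
    moreover have KEc: "Kmat m + E0 * Xi \<in> carrier_mat m m" using K E0c Xi(1) by simp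
    ultimately have r1: "vec_space.rank m (Kmat m + E0 * Xi) = m"
      using vec_space.low_rank_det_zero by blast
    have EXc: "E0 * Xi \<in> carrier_mat m m" using E0c Xi(1) by simp
    have r2: "vec_space.rank m (E0 * Xi) \<le> 1"
    proof (rule vec_space.rank_le_1_product_entries[OF EXc, of "\<lambda>r. if r = mid m then 1 else 0" "\<lambda>c. Xi $$ (1, c)"])
      fix r c assume r: "r < dim_row (E0 * Xi)" and c: "c < dim_col (E0 * Xi)"
      then have r': "r < m" and c': "c < m" using EXc by auto
      have "(E0 * Xi) $$ (r, c) = (\<Sum>k<m. E0 $$ (r, k) * Xi $$ (k, c))"
        using r' c' E0c Xi(1) by (auto simp: scalar_prod_def lessThan_atLeast0 intro!: sum.cong)
      also have "\<dots> = (\<Sum>k<m. (if k = 1 then (if r = mid m then 1 else 0) * Xi $$ (1, c) else 0))"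
        using r' by (intro sum.cong) (auto simp: E0_def)
      also have "\<dots> = (if r = mid m then 1 else 0) * Xi $$ (1, c)" using m by (simp add: sum.delta)
      finally show "(E0 * Xi) $$ (r, c) = (if r = mid m then 1 else 0) * Xi $$ (1, c)" .
    qed
    have r3: "vec_space.rank m (Kmat m + E0 * Xi) \<le> vec_space.rank m (Kmat m) + vec_space.rank m (E0 * Xi)"
      by (rule vec_space.rank_subadditive[OF K EXc])
    have "det (Kmat m) = 0" using dK g0 by simp
    then have r4: "vec_space.rank m (Kmat m) < m" using vec_space.det_zero_low_rank[OF K] by blast
    have "vec_space.rank m (Kmat m) = m - 1" using r1 r2 r3 r4 by linarith
    then show "vec_space.rank (n - 1) (walk_mat_hat n) = n - 2" using W by (simp add: m_def)
  qed
qed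



end
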